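(* Let \[P=\{x\in[0,2]^2 : x_1+10x_2\le 20,\ 10x_1+x_2\le 20\},\] \[P_L=\{(x,z)\in\mathbb{R}^2\times[0,1]^4 : x\in P,\ x_i=z_{i1}+2z_{i2}\text{ for } i=1,2\},\] \[P_{L+}=\{(x,z)\in\mathbb{R}^2\times[0,1]^4 : x\in P,\ x_i=z_{i1}+2z_{i2},\ z_{i1}+z_{i2}\le1\text{ for } i=1,2\},\] where all variables of $P_L$ and $P_{L+}$ (both $x$ and $z$) are integer variables. Then \[\operatorname{proj}_x\big(\mathrm{SC}(P_{L+})\big)\subsetneq \operatorname{proj}_x\big(\mathrm{SC}(P_L)\big).\]
   Context: For $X\subseteq\mathbb{R}^N$ with all coordinates integer, the split closure is $\mathrm{SC}(X)=\bigcap\mathrm{conv}(X\setminus S)$, the intersection over all split sets $S=\{y\in\mathbb{R}^N:\pi_0<\pi^Ty<\pi_0+1\}$ with $\pi\in\mathbb{Z}^N$, $\pi_0\in\mathbb{Z}$. $\operatorname{proj}_x$ is orthogonal projection onto the $x$-coordinates. *)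

theory Defs
  imports "HOL-Analysis.Analysis"
begin

datatype coord = X1 | X2 | Z11 | Z12 | Z21 | Z22

lemma UNIV_coord: "(UNIV :: coord set) = {X1, X2, Z11, Z12, Z21, Z22}"
  using coord.exhaust by auto

instance coord :: finite
  by standard (simp add: UNIV_coord)

definition split_set :: "real ^ 'n \<Rightarrow> int \<Rightarrow> (real ^ 'n) set" where
  "split_set \<pi> \<pi>0 = {y. real_of_int \<pi>0 < \<pi> \<bullet> y \<and> \<pi> \<bullet> y < real_of_int \<pi>0 + 1}"

text \<open>Split closure, all coordinates being integer variables.\<close>
definition split_closure :: "(real ^ 'n::finite) set \<Rightarrow> (real ^ 'n) set" where
  "split_closure X = \<Inter> {convex hull (X - split_set \<pi> \<pi>0) | \<pi> \<pi>0. \<forall>i. \<pi> $ i \<in> \<int>}"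

definition P :: "(real \<times> real) set" where
  "P = {(x1, x2). 0 \<le> x1 \<and> x1 \<le> 2 \<and> 0 \<le> x2 \<and> x2 \<le> 2 \<and>
                  x1 + 10 * x2 \<le> 20 \<and> 10 * x1 + x2 \<le> 20}"

definition in01 :: "real \<Rightarrow> bool" where
  "in01 t \<longleftrightarrow> 0 \<le> t \<and> t \<le> 1"

definition P_L :: "(real ^ coord) set" where
  "P_L = {v. (v $ X1, v $ X2) \<in> P \<and>
             in01 (v $ Z11) \<and> in01 (v $ Z12) \<and> in01 (v $ Z21) \<and> in01 (v $ Z22) \<and>
             v $ X1 = v $ Z11 + 2 * v $ Z12 \<and> v $ X2 = v $ Z21 + 2 * v $ Z22}"

definition P_Lplus :: "(real ^ coord) set" where
  "P_Lplus = {v. v \<in> P_L \<and> v $ Z11 + v $ Z12 \<le> 1 \<and> v $ Z21 + v $ Z22 \<le> 1}"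

definition proj_x :: "real ^ coord \<Rightarrow> real \<times> real" where
  "proj_x v = (v $ X1, v $ X2)"

end

theory Submission
  imports Defs
begin

definition inS :: "int \<Rightarrow> int \<Rightarrow> int \<Rightarrow> bool" where
  "inS k d t \<longleftrightarrow> d*k < t \<and> t < d*(k+1)"
lemma st1:
  fixes t a b k :: int
  assumes "0 < 20*t+9*b" "20*t+9*b < 20" "0 < 20*t+9*a" "20*t+9*a < 20"
    "0 < 22*t+9*a+9*b" "22*t+9*a+9*b < 22"
  shows "(t = 0 \<and> a = 1 \<and> b = 1) \<or> (t = 1 \<and> a = -1 \<and> b = -1)"
proof -
  have "-2 < t" "t < 3" using assms by linarith+
  then have "t = -1 \<or> t = 0 \<or> t = 1 \<or> t = 2" by linarith
  moreover have "t = -1 \<Longrightarrow> False" using assms by presburger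
  moreover have "t = 2 \<Longrightarrow> False" using assms by presburger
  moreover have "t = 0 \<Longrightarrow> a = 1 \<and> b = 1" using assms by presburger
  moreover have "t = 1 \<Longrightarrow> a = -1 \<and> b = -1" using assms by presburger
  ultimately show ?thesis by blast
qed
lemma cover:
  fixes p1 p2 p3 p4 k :: int
  assumes "inS k 4 (3*p1+p2+3*p3+p4)"
  shows "\<not> inS k 20 (20*p1+20*p3+9*p4) \<or> \<not> inS k 22 (22*p1+9*p2+22*p3+9*p4) \<or>
         \<not> inS k 20 (20*p1+9*p2+20*p3) \<or>
         (\<not> inS k 22 (22*p1+9*p2+20*p4) \<and> \<not> inS k 22 (20*p2+22*p3+9*p4)) \<or>
         (\<not> inS k 2 (2*p3+p4) \<and> \<not> inS k 20 (19*p2+20*p3) \<and> \<not> inS k 22 (22*p1+9*p2+20*p4)) \<or>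
         (\<not> inS k 22 (20*p2+22*p3+9*p4) \<and> \<not> inS k 20 (20*p1+19*p4) \<and> \<not> inS k 2 (2*p1+p2))"
proof (rule ccontr)
  assume H: "\<not> ?thesis"
  define t where "t = p1 + p3 - k"
  have "0 < 20*t+9*p4" "20*t+9*p4 < 20" "0 < 20*t+9*p2" "20*t+9*p2 < 20"
    "0 < 22*t+9*p2+9*p4" "22*t+9*p2+9*p4 < 22"
    using H unfolding inS_def t_def by (simp_all add: algebra_simps)
  then have c: "(t = 0 \<and> p2 = 1 \<and> p4 = 1) \<or> (t = 1 \<and> p2 = -1 \<and> p4 = -1)" by (rule st1)
  have p3: "p3 = k + t - p1" unfolding t_def by simp
  have HE: "inS k 22 (22*p1+9*p2+20*p4) \<or> inS k 22 (20*p2+22*p3+9*p4)"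
   and HD: "inS k 2 (2*p3+p4) \<or> inS k 20 (19*p2+20*p3) \<or> inS k 22 (22*p1+9*p2+20*p4)"
   and HH: "inS k 22 (20*p2+22*p3+9*p4) \<or> inS k 20 (20*p1+19*p4) \<or> inS k 2 (2*p1+p2)"
    using H by blast+
  show False
  proof (cases "t = 0 \<and> p2 = 1 \<and> p4 = 1")
    case True
    then have t0: "t = 0" "p2 = 1" "p4 = 1" by auto
    have kr: "-2 < k" "k < 2" using assms unfolding inS_def p3 t0 by simp_all
    have e1: "inS k 22 (22*p1+9*p2+20*p4) \<Longrightarrow> p1 = k - 1" unfolding inS_def t0 by presburger
    have e2: "inS k 22 (20*p2+22*p3+9*p4) \<Longrightarrow> p1 = 1" unfolding inS_def t0 p3 by presburger
    have e3: "inS k 2 (2*p3+p4) \<Longrightarrow> p1 = 0" unfolding inS_def t0 p3 by presburger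
    have e4: "inS k 20 (19*p2+20*p3) \<Longrightarrow> p1 = 0" unfolding inS_def t0 p3 by presburger
    have e5: "inS k 20 (20*p1+19*p4) \<Longrightarrow> p1 = k" unfolding inS_def t0 by presburger
    have e6: "inS k 2 (2*p1+p2) \<Longrightarrow> p1 = k" unfolding inS_def t0 by presburger
    show False using HE HD HH e1 e2 e3 e4 e5 e6 kr by linarith
  next
    case False
    then have t0: "t = 1" "p2 = -1" "p4 = -1" using c by auto
    have kr: "-3 < k" "k < 1" using assms unfolding inS_def p3 t0 by simp_all
    have e1: "inS k 22 (22*p1+9*p2+20*p4) \<Longrightarrow> p1 = k + 2" unfolding inS_def t0 by presburger
    have e2: "inS k 22 (20*p2+22*p3+9*p4) \<Longrightarrow> p1 = -1" unfolding inS_def t0 p3 by presburger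
    have e3: "inS k 2 (2*p3+p4) \<Longrightarrow> p1 = 0" unfolding inS_def t0 p3 by presburger
    have e4: "inS k 20 (19*p2+20*p3) \<Longrightarrow> p1 = 0" unfolding inS_def t0 p3 by presburger
    have e5: "inS k 20 (20*p1+19*p4) \<Longrightarrow> p1 = k + 1" unfolding inS_def t0 by presburger
    have e6: "inS k 2 (2*p1+p2) \<Longrightarrow> p1 = k + 1" unfolding inS_def t0 by presburger
    show False using HE HD HH e1 e2 e3 e4 e5 e6 kr by linarith
  qed
qed

lemma hull5:
  fixes X :: "'a::real_vector set"
  assumes "q1 \<in> X" "q2 \<in> X" "q3 \<in> X" "q4 \<in> X" "q5 \<in> X"
    "0 \<le> c1" "0 \<le> c2" "0 \<le> c3" "0 \<le> c4" "0 \<le> c5" "c1+c2+c3+c4+c5 = 1"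
  shows "c1 *\<^sub>R q1 + c2 *\<^sub>R q2 + c3 *\<^sub>R q3 + c4 *\<^sub>R q4 + c5 *\<^sub>R q5 \<in> convex hull X"
proof -
  let ?a = "\<lambda>i. [c1,c2,c3,c4,c5] ! i" and ?y = "\<lambda>i. [q1,q2,q3,q4,q5] ! i"
  have "(\<Sum> j \<in> {0::nat,1,2,3,4}. ?a j *\<^sub>R ?y j) \<in> convex hull X"
  proof (rule convex_sum)
    show "(\<Sum> i \<in> {0::nat,1,2,3,4}. ?a i) = 1" using assms by simp
    show "\<And>i. i \<in> {0::nat,1,2,3,4} \<Longrightarrow> ?a i \<ge> 0" using assms by auto
    show "\<And>i. i \<in> {0::nat,1,2,3,4} \<Longrightarrow> ?y i \<in> convex hull X" using assms by (auto intro: hull_inc)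
  qed simp_all
  then show ?thesis by (simp add: algebra_simps)
qed

definition vec6 :: "real \<Rightarrow> real \<Rightarrow> real \<Rightarrow> real \<Rightarrow> real \<Rightarrow> real \<Rightarrow> real ^ coord" where
  "vec6 a b c d e f = (\<chi> i. case i of X1 \<Rightarrow> a | X2 \<Rightarrow> b | Z11 \<Rightarrow> c | Z12 \<Rightarrow> d | Z21 \<Rightarrow> e | Z22 \<Rightarrow> f)"

lemma vec6_nth [simp]:
  "vec6 a b c d e f $ X1 = a" "vec6 a b c d e f $ X2 = b" "vec6 a b c d e f $ Z11 = c"
  "vec6 a b c d e f $ Z12 = d" "vec6 a b c d e f $ Z21 = e" "vec6 a b c d e f $ Z22 = f"
  by (simp_all add: vec6_def)

definition mk :: "real \<Rightarrow> real \<Rightarrow> real \<Rightarrow> real \<Rightarrow> real ^ coord" where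
  "mk a b c d = vec6 (a + 2*b) (c + 2*d) a b c d"

lemma all_coord: "(\<forall>i::coord. Q i) \<longleftrightarrow> Q X1 \<and> Q X2 \<and> Q Z11 \<and> Q Z12 \<and> Q Z21 \<and> Q Z22"
  by (metis coord.exhaust)

lemma vec_eq6: "(u::real^coord) = w \<longleftrightarrow> u$X1 = w$X1 \<and> u$X2 = w$X2 \<and> u$Z11 = w$Z11 \<and>
   u$Z12 = w$Z12 \<and> u$Z21 = w$Z21 \<and> u$Z22 = w$Z22"
  unfolding vec_eq_iff all_coord ..

lemma inner6: "(p::real^coord) \<bullet> y = p$X1 * y$X1 + p$X2 * y$X2 + p$Z11 * y$Z11 + p$Z12 * y$Z12
   + p$Z21 * y$Z21 + p$Z22 * y$Z22"
  by (simp add: inner_vec_def UNIV_coord)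

lemma inS_real:
  assumes "(0::int) < d"
  shows "(real_of_int k < real_of_int t / real_of_int d \<and> real_of_int t / real_of_int d < real_of_int k + 1)
     \<longleftrightarrow> inS k d t"
proof -
  have dp: "(0::real) < of_int d" using assms by simp
  have "real_of_int k < real_of_int t / real_of_int d \<longleftrightarrow> real_of_int (d*k) < real_of_int t"
    using dp by (simp add: field_simps)
  moreover have "real_of_int t / real_of_int d < real_of_int k + 1 \<longleftrightarrow> real_of_int t < real_of_int (d*(k+1))"
    using dp by (simp add: field_simps)
  ultimately show ?thesis unfolding inS_def of_int_less_iff by simp
qed

lemma notS:
  assumes "p \<bullet> u = real_of_int t / real_of_int d" "0 < d" "\<not> inS k d t"
  shows "u \<notin> split_set p k"
  using assms inS_real[of d k t] unfolding split_set_def by auto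

lemma notS1:
  assumes "p \<bullet> u = real_of_int t"
  shows "u \<notin> split_set p k"
  using notS[of p u t 1 k] assms by (simp add: inS_def)

lemma mk_PL: "mk a b c d \<in> P_L \<longleftrightarrow> 0 \<le> a + 2*b \<and> a + 2*b \<le> 2 \<and> 0 \<le> c + 2*d \<and> c + 2*d \<le> 2 \<and>
   (a + 2*b) + 10*(c + 2*d) \<le> 20 \<and> 10*(a + 2*b) + (c+2*d) \<le> 20 \<and>
   0 \<le> a \<and> a \<le> 1 \<and> 0 \<le> b \<and> b \<le> 1 \<and> 0 \<le> c \<and> c \<le> 1 \<and> 0 \<le> d \<and> d \<le> 1"
  by (auto simp: P_L_def P_def in01_def mk_def)

definition vstar :: "real ^ coord" where "vstar = mk (3/4) (1/4) (3/4) (1/4)"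

lemma vstar_in:
  assumes pi: "\<forall>i. p $ i \<in> \<int>"
  shows "vstar \<in> convex hull (P_L - split_set p k)"
proof -
  obtain aX1 where aX1: "p$X1 = of_int aX1" using pi by (meson Ints_cases)
  obtain aX2 where aX2: "p$X2 = of_int aX2" using pi by (meson Ints_cases)
  obtain a11 where a11: "p$Z11 = of_int a11" using pi by (meson Ints_cases)
  obtain a12 where a12: "p$Z12 = of_int a12" using pi by (meson Ints_cases)
  obtain a21 where a21: "p$Z21 = of_int a21" using pi by (meson Ints_cases)
  obtain a22 where a22: "p$Z22 = of_int a22" using pi by (meson Ints_cases)
  define p1 where "p1 = aX1 + a11"
  define p2 where "p2 = 2*aX1 + a12"
  define p3 where "p3 = aX2 + a21"
  define p4 where "p4 = 2*aX2 + a22"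
  have im: "p \<bullet> mk a b c d = of_int p1 * a + of_int p2 * b + of_int p3 * c + of_int p4 * d" for a b c d
    unfolding inner6 mk_def p1_def p2_def p3_def p4_def aX1 aX2 a11 a12 a21 a22
    by (simp add: algebra_simps)
  let ?X = "P_L - split_set p k"
  have vP: "vstar \<in> P_L" unfolding vstar_def mk_PL by simp
  show ?thesis
  proof (cases "vstar \<in> split_set p k")
    case False
    then show ?thesis using vP by (auto intro: hull_inc)
  next
    case True
    have "p \<bullet> vstar = real_of_int (3*p1+p2+3*p3+p4) / real_of_int 4"
      unfolding vstar_def im by (simp add: field_simps)
    then have iv: "inS k 4 (3*p1+p2+3*p3+p4)"
      using True inS_real[of 4 k "3*p1+p2+3*p3+p4"] unfolding split_set_def by simp
    have I0: "mk 0 0 0 0 \<in> ?X"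
      by (simp add: mk_PL, rule notS1[of _ _ 0], simp add: im)
    have I12: "mk 0 1 0 0 \<in> ?X"
      by (simp add: mk_PL, rule notS1[of _ _ p2], simp add: im)
    have I22: "mk 0 0 0 1 \<in> ?X"
      by (simp add: mk_PL, rule notS1[of _ _ p4], simp add: im)
    have I1: "mk 1 0 1 0 \<in> ?X"
      by (simp add: mk_PL, rule notS1[of _ _ "p1+p3"], simp add: im)
    have pt: "mk a b c d \<in> ?X" if "mk a b c d \<in> P_L" "p \<bullet> mk a b c d = real_of_int t / real_of_int dd"
      "0 < dd" "\<not> inS k dd t" for a b c d t dd
      using that notS by blast
    have eqv: "vstar = c1 *\<^sub>R q1 + c2 *\<^sub>R q2 + c3 *\<^sub>R q3 + c4 *\<^sub>R q4 + c5 *\<^sub>R q5 \<Longrightarrow>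
      q1 \<in> ?X \<Longrightarrow> q2 \<in> ?X \<Longrightarrow> q3 \<in> ?X \<Longrightarrow> q4 \<in> ?X \<Longrightarrow> q5 \<in> ?X \<Longrightarrow>
      0 \<le> c1 \<Longrightarrow> 0 \<le> c2 \<Longrightarrow> 0 \<le> c3 \<Longrightarrow> 0 \<le> c4 \<Longrightarrow> 0 \<le> c5 \<Longrightarrow> c1+c2+c3+c4+c5 = 1 \<Longrightarrow>
      vstar \<in> convex hull ?X" for c1 c2 c3 c4 c5 q1 q2 q3 q4 q5
      using hull5[of q1 ?X q2 q3 q4 q5 c1 c2 c3 c4 c5] by simp
    note cv = cover[OF iv]
    show ?thesis
    proof -
      {
        assume h: "\<not> inS k 20 (20*p1+20*p3+9*p4)"
        have A: "mk 1 0 1 (9/20) \<in> ?X"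
          by (rule pt[OF _ _ _ h]) (simp_all add: mk_PL im field_simps)
        have ?thesis
          by (rule eqv[of "1/4" "mk 0 1 0 0" "7/36" "mk 1 0 1 0" "5/9" "mk 1 0 1 (9/20)" 0 "mk 0 0 0 0" 0 "mk 0 0 0 0"], simp add: vstar_def mk_def vec_eq6)
             (simp_all add: A I12 I1 I0 del: Diff_iff)
      }
      moreover
      {
        assume h: "\<not> inS k 22 (22*p1+9*p2+22*p3+9*p4)"
        have B: "mk 1 (9/22) 1 (9/22) \<in> ?X"
          by (rule pt[OF _ _ _ h]) (simp_all add: mk_PL im field_simps)
        have ?thesis
          by (rule eqv[of "1/4" "mk 0 0 0 0" "5/36" "mk 1 0 1 0" "11/18" "mk 1 (9/22) 1 (9/22)" 0 "mk 0 0 0 0" 0 "mk 0 0 0 0"], simp add: vstar_def mk_def vec_eq6)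
             (simp_all add: B I1 I0 del: Diff_iff)
      }
      moreover
      {
        assume h: "\<not> inS k 20 (20*p1+9*p2+20*p3)"
        have C: "mk 1 (9/20) 1 0 \<in> ?X"
          by (rule pt[OF _ _ _ h]) (simp_all add: mk_PL im field_simps)
        have ?thesis
          by (rule eqv[of "1/4" "mk 0 0 0 1" "7/36" "mk 1 0 1 0" "5/9" "mk 1 (9/20) 1 0" 0 "mk 0 0 0 0" 0 "mk 0 0 0 0"], simp add: vstar_def mk_def vec_eq6)
             (simp_all add: C I22 I1 I0 del: Diff_iff)
      }
      moreover
      {
        assume h1: "\<not> inS k 22 (22*p1+9*p2+20*p4)" and h2: "\<not> inS k 22 (20*p2+22*p3+9*p4)"
        have E: "mk 1 (9/22) 0 (10/11) \<in> ?X"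
          by (rule pt[OF _ _ _ h1]) (simp_all add: mk_PL im field_simps)
        have E2: "mk 0 (10/11) 1 (9/22) \<in> ?X"
          by (rule pt[OF _ _ _ h2]) (simp_all add: mk_PL im field_simps)
        have ?thesis
          by (rule eqv[of "7/116" "mk 0 0 0 0" "65/116" "mk 1 0 1 0" "11/58" "mk 1 (9/22) 0 (10/11)"
                 "11/58" "mk 0 (10/11) 1 (9/22)" 0 "mk 0 0 0 0"], simp add: vstar_def mk_def vec_eq6)
             (simp_all add: E E2 I1 I0 del: Diff_iff)
      }
      moreover
      {
        assume h1: "\<not> inS k 2 (2*p3+p4)" and h2: "\<not> inS k 20 (19*p2+20*p3)"
          and h3: "\<not> inS k 22 (22*p1+9*p2+20*p4)"
        have D: "mk 0 0 1 (1/2) \<in> ?X"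
          by (rule pt[OF _ _ _ h1]) (simp_all add: mk_PL im field_simps)
        have G: "mk 0 (19/20) 1 0 \<in> ?X"
          by (rule pt[OF _ _ _ h2]) (simp_all add: mk_PL im field_simps)
        have E: "mk 1 (9/22) 0 (10/11) \<in> ?X"
          by (rule pt[OF _ _ _ h3]) (simp_all add: mk_PL im field_simps)
        have ?thesis
          by (rule eqv[of "41/2716" "mk 0 0 0 0" "1399/2716" "mk 1 0 1 0" "99/1358" "mk 0 0 1 (1/2)"
                 "110/679" "mk 0 (19/20) 1 0" "319/1358" "mk 1 (9/22) 0 (10/11)"], simp add: vstar_def mk_def vec_eq6)
             (simp_all add: D G E I1 I0 del: Diff_iff)
      }
      moreover
      {
        assume h1: "\<not> inS k 22 (20*p2+22*p3+9*p4)" and h2: "\<not> inS k 20 (20*p1+19*p4)"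
          and h3: "\<not> inS k 2 (2*p1+p2)"
        have E2: "mk 0 (10/11) 1 (9/22) \<in> ?X"
          by (rule pt[OF _ _ _ h1]) (simp_all add: mk_PL im field_simps)
        have H: "mk 1 0 0 (19/20) \<in> ?X"
          by (rule pt[OF _ _ _ h2]) (simp_all add: mk_PL im field_simps)
        have J: "mk 1 (1/2) 0 0 \<in> ?X"
          by (rule pt[OF _ _ _ h3]) (simp_all add: mk_PL im field_simps)
        have ?thesis
          by (rule eqv[of "41/2716" "mk 0 0 0 0" "1399/2716" "mk 1 0 1 0" "319/1358" "mk 0 (10/11) 1 (9/22)"
                 "110/679" "mk 1 0 0 (19/20)" "99/1358" "mk 1 (1/2) 0 0"], simp add: vstar_def mk_def vec_eq6)
             (simp_all add: E2 H J I1 I0 del: Diff_iff)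
      }
      ultimately show ?thesis using cv by blast
    qed
  qed
qed

lemma vstar_SC: "vstar \<in> split_closure P_L"
  unfolding split_closure_def using vstar_in by blast

lemma cut_lemma:
  assumes "w \<in> split_closure P_Lplus"
  shows "w$Z11 + w$Z12 + w$Z22 \<le> 1" "w$Z12 + w$Z21 + w$Z22 \<le> 1"
    "w$X1 = w$Z11 + 2*w$Z12" "w$X2 = w$Z21 + 2*w$Z22"
proof -
  let ?c1 = "vec6 1 0 (-1) (-2) 0 0" and ?c2 = "vec6 0 1 0 0 (-1) (-2)"
  have key: "w \<in> {y. ?c1 \<bullet> y = 0} \<inter> {y. ?c2 \<bullet> y = 0} \<inter> {y. q \<bullet> y \<le> 1}"
    if q: "q = vec6 0 0 a b c 1" "a \<in> {0,1}" "b = 1" "c \<in> {0,1}" "a + c = 1" for q a b c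
  proof -
    have qi: "\<forall>i. q $ i \<in> \<int>" using q unfolding all_coord by auto
    have "w \<in> convex hull (P_Lplus - split_set q 1)"
      using assms qi unfolding split_closure_def by blast
    moreover have "convex hull (P_Lplus - split_set q 1) \<subseteq> {y. ?c1 \<bullet> y = 0} \<inter> {y. ?c2 \<bullet> y = 0} \<inter> {y. q \<bullet> y \<le> 1}"
    proof (rule hull_minimal)
      show "convex ({y. ?c1 \<bullet> y = 0} \<inter> {y. ?c2 \<bullet> y = 0} \<inter> {y. q \<bullet> y \<le> 1})"
        by (intro convex_Int convex_hyperplane convex_halfspace_le)
      show "P_Lplus - split_set q 1 \<subseteq> {y. ?c1 \<bullet> y = 0} \<inter> {y. ?c2 \<bullet> y = 0} \<inter> {y. q \<bullet> y \<le> 1}"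
        using q by (auto simp: P_Lplus_def P_L_def P_def in01_def split_set_def inner6)
    qed
    ultimately show ?thesis by blast
  qed
  have k1: "w \<in> {y. ?c1 \<bullet> y = 0} \<inter> {y. ?c2 \<bullet> y = 0} \<inter> {y. vec6 0 0 1 1 0 1 \<bullet> y \<le> 1}"
    by (rule key[of _ 1 1 0]) simp_all
  have k2: "w \<in> {y. vec6 0 0 0 1 1 1 \<bullet> y \<le> 1}"
    using key[of _ 0 1 1] by simp
  show "w$Z11 + w$Z12 + w$Z22 \<le> 1" "w$X1 = w$Z11 + 2*w$Z12" "w$X2 = w$Z21 + 2*w$Z22"
    using k1 by (simp_all add: inner6)
  show "w$Z12 + w$Z21 + w$Z22 \<le> 1" using k2 by (simp add: inner6)
qed

theorem theorem4:
  shows "proj_x ` split_closure P_Lplus \<subset> proj_x ` split_closure P_L"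
proof
  have mono: "split_closure P_Lplus \<subseteq> split_closure P_L"
  proof -
    have "P_Lplus \<subseteq> P_L" by (auto simp: P_Lplus_def)
    then have "convex hull (P_Lplus - split_set q q0) \<subseteq> convex hull (P_L - split_set q q0)" for q q0
      by (intro hull_mono) blast
    then show ?thesis unfolding split_closure_def by blast
  qed
  then show "proj_x ` split_closure P_Lplus \<subseteq> proj_x ` split_closure P_L" by blast
  have "(5/4, 5/4) \<in> proj_x ` split_closure P_L"
  proof
    show "(5/4, 5/4) = proj_x vstar" by (simp add: proj_x_def vstar_def mk_def)
  qed (rule vstar_SC)
  moreover have "(5/4, 5/4) \<notin> proj_x ` split_closure P_Lplus"
  proof
    assume "(5/4, 5/4) \<in> proj_x ` split_closure P_Lplus"
    then obtain w where w: "w \<in> split_closure P_Lplus" "proj_x w = (5/4, 5/4)" by auto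
    then have "w$X1 = 5/4" "w$X2 = 5/4" by (auto simp: proj_x_def)
    with cut_lemma[OF w(1)] show False by linarith
  qed
  ultimately show "proj_x ` split_closure P_Lplus \<noteq> proj_x ` split_closure P_L" by blast
qed

end
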